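(* Let $2\leq p\leq q$ be integers and let $BS(p,q)=\langle a,t\mid ta^pt^{-1}=a^q\rangle$ with generating set $\{a,t\}$. Write $p=2k$ or $p=2k+1$ and $q=2\ell$ or $q=2\ell+1$ with integers $k,\ell$, and set $C_k=1$ if $p=2k$, $C_k=2$ if $p=2k+1$; $C_\ell=1$ if $q=2\ell$, $C_\ell=2$ if $q=2\ell+1$. If $4\leq p\leq q$, the growth rate of $BS(p,q)$ is bounded below by the largest real zero of $$P_{pq}(x)=x^{\ell+1}-x^{\ell}-2(x^{\ell-1}+x^{\ell-2}+\cdots+x^{\ell-k+1})-C_kx^{\ell-k}-2(x^{\ell-1}+x^{\ell-2}+\cdots+x)-C_\ell .$$ In the remaining cases the growth rate of $BS(p,q)$ is bounded below by the largest real zero of the polynomial $P_{pq}$ given by: $P_{22}(x)=x^2-x-2$; $P_{23}(x)=x^2-x-3$; $P_{2q}(x)=x^{\ell+1}-x^{\ell}-x^{\ell-1}-2(x^{\ell-1}+x^{\ell-2}+\cdots+x)-C_\ell$ for $q\geq 4$; $P_{33}(x)=x^2-x-4$; $P_{3q}(x)=x^{\ell+1}-x^{\ell}-2x^{\ell-1}-2(x^{\ell-1}+x^{\ell-2}+\cdots+x)-C_\ell$ for $q\geq 4$.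
   Context: For a group $G$ generated by a finite set $S$, let $\gamma(n)=\#\{x\in G:\|x\|_S\leq n\}$, where $\|\cdot\|_S$ is the word length with respect to $S\cup S^{-1}$. The growth rate of $G$ with respect to $S$ is $\lim_{n\to\infty}\gamma(n)^{1/n}$. *)

theory Defs
  imports Complex_Main
begin

text \<open>Generators a, t. A letter is a generator together with a flag: False = the
generator itself, True = its inverse. Words are lists of letters, i.e. words over
S \<union> S^-1 with S = {a, t}.\<close>

datatype gen = GA | GT

type_synonym letter = "gen \<times> bool"

definition linv :: "letter \<Rightarrow> letter" where
  "linv x = (fst x, \<not> snd x)"

definition BS_rel :: "nat \<Rightarrow> nat \<Rightarrow> letter list" where
  "BS_rel p q = [(GT, False)] @ replicate p (GA, False) @ [(GT, True)] @ replicate q (GA, True)"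

text \<open>The congruence on words generated by free cancellation and the relator;
the quotient is the group BS(p,q) = <a, t | t a^p t^-1 = a^q>.\<close>
inductive BS_eq :: "nat \<Rightarrow> nat \<Rightarrow> letter list \<Rightarrow> letter list \<Rightarrow> bool" for p q where
  refl: "BS_eq p q w w"
| sym: "BS_eq p q u v \<Longrightarrow> BS_eq p q v u"
| trans: "BS_eq p q u v \<Longrightarrow> BS_eq p q v w \<Longrightarrow> BS_eq p q u w"
| cancel: "BS_eq p q (u @ [x, linv x] @ v) (u @ v)"
| rel: "BS_eq p q (u @ BS_rel p q @ v) (u @ v)"

definition BS_elem :: "nat \<Rightarrow> nat \<Rightarrow> letter list \<Rightarrow> letter list set" where
  "BS_elem p q w = {v. BS_eq p q w v}"

definition BS_group :: "nat \<Rightarrow> nat \<Rightarrow> letter list set set" where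
  "BS_group p q = range (BS_elem p q)"

definition BS_word_length :: "nat \<Rightarrow> nat \<Rightarrow> letter list set \<Rightarrow> nat" where
  "BS_word_length p q X = (LEAST n. \<exists>w\<in>X. length w = n)"

definition BS_gamma :: "nat \<Rightarrow> nat \<Rightarrow> nat \<Rightarrow> nat" where
  "BS_gamma p q n = card {X \<in> BS_group p q. BS_word_length p q X \<le> n}"

definition BS_growth_rate :: "nat \<Rightarrow> nat \<Rightarrow> real" where
  "BS_growth_rate p q = lim (\<lambda>n. root n (real (BS_gamma p q n)))"

definition BS_P :: "nat \<Rightarrow> nat \<Rightarrow> real \<Rightarrow> real" where
  "BS_P p q x =
    (let k = p div 2; l = q div 2;
         Ck = (if even p then 1 else 2 :: real);
         Cl = (if even q then 1 else 2 :: real)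
     in if p = 2 \<and> q = 2 then x^2 - x - 2
        else if p = 2 \<and> q = 3 then x^2 - x - 3
        else if p = 2 then
          x^(l+1) - x^l - x^(l-1) - 2 * (\<Sum>i=1..l-1. x^i) - Cl
        else if p = 3 \<and> q = 3 then x^2 - x - 4
        else if p = 3 then
          x^(l+1) - x^l - 2 * x^(l-1) - 2 * (\<Sum>i=1..l-1. x^i) - Cl
        else
          x^(l+1) - x^l - 2 * (\<Sum>i=l-k+1..l-1. x^i) - Ck * x^(l-k)
            - 2 * (\<Sum>i=1..l-1. x^i) - Cl)"

end

theory Submission
  imports Defs "HOL-Computational_Algebra.Polynomial"
begin

lemma BS_eq_ctx: "BS_eq p q u v \<Longrightarrow> BS_eq p q (x @ u @ y) (x @ v @ y)"
proof (induction rule: BS_eq.induct)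
  case (refl w) then show ?case by (rule BS_eq.refl)
next
  case (sym u v) then show ?case by (blast intro: BS_eq.sym)
next
  case (trans u v w) then show ?case by (metis BS_eq.trans)
next
  case (cancel u z v)
  have "BS_eq p q ((x @ u) @ [z, linv z] @ (v @ y)) ((x @ u) @ (v @ y))" by (rule BS_eq.cancel)
  then show ?case by simp
next
  case (rel u v)
  have "BS_eq p q ((x @ u) @ BS_rel p q @ (v @ y)) ((x @ u) @ (v @ y))" by (rule BS_eq.rel)
  then show ?case by simp
qed

lemma BS_eq_app: "BS_eq p q u u' \<Longrightarrow> BS_eq p q v v' \<Longrightarrow> BS_eq p q (u @ v) (u' @ v')"
proof -
  assume a: "BS_eq p q u u'" and b: "BS_eq p q v v'"
  have "BS_eq p q ([] @ u @ v) ([] @ u' @ v)" by (rule BS_eq_ctx[OF a])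
  moreover have "BS_eq p q (u' @ v @ []) (u' @ v' @ [])" by (rule BS_eq_ctx[OF b])
  ultimately show ?thesis by (metis BS_eq.trans append_Nil append_Nil2)
qed

lemma BS_elem_self: "w \<in> BS_elem p q w" by (simp add: BS_elem_def BS_eq.refl)

lemma BS_elem_eq_iff: "BS_elem p q u = BS_elem p q v \<longleftrightarrow> BS_eq p q u v"
proof
  assume "BS_elem p q u = BS_elem p q v"
  then have "v \<in> BS_elem p q u" using BS_elem_self by metis
  then show "BS_eq p q u v" by (simp add: BS_elem_def)
next
  assume h: "BS_eq p q u v"
  show "BS_elem p q u = BS_elem p q v"
    unfolding BS_elem_def using h by (auto intro: BS_eq.trans BS_eq.sym)
qed

lemma BS_wl_le: "BS_word_length p q (BS_elem p q w) \<le> length w"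
  unfolding BS_word_length_def by (rule Least_le) (use BS_elem_self in blast)

lemma BS_wl_word:
  assumes "X \<in> BS_group p q"
  obtains w where "X = BS_elem p q w" "length w = BS_word_length p q X"
proof -
  obtain w0 where X: "X = BS_elem p q w0" using assms by (auto simp: BS_group_def)
  have "\<exists>n. \<exists>w\<in>X. length w = n" using BS_elem_self X by blast
  then have "\<exists>w\<in>X. length w = BS_word_length p q X"
    unfolding BS_word_length_def by (rule LeastI_ex)
  then obtain w where w: "w \<in> X" "length w = BS_word_length p q X" by blast
  have "BS_eq p q w0 w" using w X by (simp add: BS_elem_def)
  then have "X = BS_elem p q w" using X BS_elem_eq_iff by metis
  then show ?thesis using that w by blast
qed

definition Aset where "Aset p q n = {X \<in> BS_group p q. BS_word_length p q X \<le> n}"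

lemma finite_gen: "finite (UNIV :: gen set)"
proof -
  have h: "(UNIV :: gen set) = {GA, GT}" by (auto intro: gen.exhaust)
  show ?thesis by (subst h) simp
qed

lemma finite_letters: "finite (UNIV :: letter set)"
proof -
  have "(UNIV :: letter set) = (UNIV::gen set) \<times> (UNIV::bool set)" by simp
  then show ?thesis using finite_cartesian_product[OF finite_gen finite_UNIV] by metis
qed

lemma Aset_sub: "Aset p q n \<subseteq> BS_elem p q ` {w. set w \<subseteq> UNIV \<and> length w \<le> n}"
proof
  fix X assume "X \<in> Aset p q n"
  then have X: "X \<in> BS_group p q" "BS_word_length p q X \<le> n" by (auto simp: Aset_def)
  obtain w where "X = BS_elem p q w" "length w = BS_word_length p q X" using BS_wl_word[OF X(1)] by blast
  then show "X \<in> BS_elem p q ` {w. set w \<subseteq> UNIV \<and> length w \<le> n}" using X(2) by auto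
qed

lemma Aset_finite: "finite (Aset p q n)"
  by (rule finite_subset[OF Aset_sub]) (intro finite_imageI finite_lists_length_le finite_letters)

lemma Aset_one: "BS_elem p q [] \<in> Aset p q n"
  using BS_wl_le[of p q "[]"] by (auto simp: Aset_def BS_group_def)

lemma gamma_Aset: "BS_gamma p q n = card (Aset p q n)"
  by (simp add: BS_gamma_def Aset_def)

lemma gamma_pos: "BS_gamma p q n \<ge> 1"
  using Aset_one Aset_finite gamma_Aset by (metis One_nat_def Suc_leI card_gt_0_iff empty_iff)

lemma gamma_submult: "BS_gamma p q (m + n) \<le> BS_gamma p q m * BS_gamma p q n"
proof -
  define W where "W X = (SOME w. X = BS_elem p q w \<and> length w = BS_word_length p q X)" for X
  have W: "X = BS_elem p q (W X) \<and> length (W X) = BS_word_length p q X" if "X \<in> BS_group p q" for X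
    unfolding W_def by (rule someI_ex) (use BS_wl_word[OF that] in blast)
  define F where "F X = (BS_elem p q (take m (W X)), BS_elem p q (drop m (W X)))" for X
  have inj: "inj_on F (Aset p q (m + n))"
  proof
    fix X Y assume X: "X \<in> Aset p q (m + n)" and Y: "Y \<in> Aset p q (m + n)" and e: "F X = F Y"
    from e have "BS_eq p q (take m (W X)) (take m (W Y))" "BS_eq p q (drop m (W X)) (drop m (W Y))"
      by (auto simp: F_def BS_elem_eq_iff)
    then have "BS_eq p q (take m (W X) @ drop m (W X)) (take m (W Y) @ drop m (W Y))"
      by (rule BS_eq_app)
    then have "BS_elem p q (W X) = BS_elem p q (W Y)" by (simp add: BS_elem_eq_iff)
    then show "X = Y" using W X Y by (metis (no_types, lifting) Aset_def mem_Collect_eq)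
  qed
  have img: "F ` Aset p q (m + n) \<subseteq> Aset p q m \<times> Aset p q n"
  proof
    fix Z assume "Z \<in> F ` Aset p q (m + n)"
    then obtain X where X: "X \<in> Aset p q (m + n)" "Z = F X" by blast
    then have XG: "X \<in> BS_group p q" and l: "length (W X) \<le> m + n" using W by (auto simp: Aset_def)
    have "BS_word_length p q (BS_elem p q (take m (W X))) \<le> m"
      using BS_wl_le[of p q "take m (W X)"] by simp
    moreover have "BS_word_length p q (BS_elem p q (drop m (W X))) \<le> n"
      using BS_wl_le[of p q "drop m (W X)"] l by simp
    ultimately show "Z \<in> Aset p q m \<times> Aset p q n"
      using X by (auto simp: F_def Aset_def BS_group_def)
  qed
  have "card (Aset p q (m + n)) \<le> card (Aset p q m \<times> Aset p q n)"
    by (rule card_inj_on_le[OF inj img]) (simp add: Aset_finite)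
  then show ?thesis by (simp add: gamma_Aset card_cartesian_product)
qed

definition hh :: "int \<Rightarrow> int" where "hh q = (q - 1) div 2"
definition smd :: "int \<Rightarrow> int \<Rightarrow> int" where "smd m q = (m + hh q) mod q - hh q"
definition sdv :: "int \<Rightarrow> int \<Rightarrow> int" where "sdv m q = (m + hh q) div q"
definition Rs :: "int \<Rightarrow> int set" where "Rs q = {-hh q .. q - 1 - hh q}"

lemma F1: "m = q * sdv m q + smd m q"
proof -
  have e: "q * ((m + hh q) div q) + (m + hh q) mod q = m + hh q" by (rule mult_div_mod_eq)
  show ?thesis unfolding smd_def sdv_def using e by linarith
qed

lemma F2: "q > 0 \<Longrightarrow> smd m q \<in> Rs q"
  unfolding smd_def Rs_def by (simp add: pos_mod_bound pos_mod_sign)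

lemma hh_nonneg: "q > 0 \<Longrightarrow> hh q \<ge> 0" by (simp add: hh_def)
lemma hh_lt: "q > 0 \<Longrightarrow> hh q < q" by (simp add: hh_def)

lemma F3:
  assumes "q > 0" "r \<in> Rs q"
  shows "smd (r + q * j) q = r" "sdv (r + q * j) q = j"
proof -
  have b: "0 \<le> r + hh q" "r + hh q < q" using assms by (auto simp: Rs_def)
  have ee: "r + q * j + hh q = (r + hh q) + q * j" by simp
  have "(r + q * j + hh q) mod q = (r + hh q) mod q" unfolding ee by (rule mod_mult_self2)
  also have "\<dots> = r + hh q" using b by simp
  finally show "smd (r + q * j) q = r" by (simp add: smd_def)
  have "(r + q * j + hh q) div q = (r + hh q + q * j) div q" by (simp add: algebra_simps)
  also have "\<dots> = (r + hh q) div q + j" using assms(1) by (simp add: mult.commute)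
  also have "\<dots> = j" using b by simp
  finally show "sdv (r + q * j) q = j" by (simp add: sdv_def)
qed

lemma F3': "q > 0 \<Longrightarrow> r \<in> Rs q \<Longrightarrow> smd r q = r \<and> sdv r q = 0"
  using F3[of q r 0] by simp

lemma zero_Rs: "q > 0 \<Longrightarrow> 0 \<in> Rs q" by (simp add: Rs_def hh_def)

lemma F4: assumes "q > 0" "r \<in> Rs q" "q dvd r" shows "r = 0"
proof -
  obtain k where k: "r = q * k" using assms(3) by (auto simp: dvd_def)
  have "smd (0 + q * k) q = 0" by (rule F3(1)[OF assms(1) zero_Rs[OF assms(1)]])
  moreover have "smd (r + q * 0) q = r" by (rule F3(1)[OF assms(1) assms(2)])
  ultimately show ?thesis using k by simp
qed

type_synonym block = "int \<times> bool"
type_synonym pt = "block list \<times> int"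

definition hsig :: "block list \<Rightarrow> bool option" where
  "hsig b = (case b of [] \<Rightarrow> None | (r, e) # _ \<Rightarrow> Some e)"

definition tR :: "int \<Rightarrow> int \<Rightarrow> pt \<Rightarrow> pt" where
  "tR p q x = (let b = fst x; m = snd x in
     if hsig b = Some True \<and> q dvd m then (tl b, fst (hd b) + p * (m div q))
     else ((smd m q, False) # b, p * sdv m q))"

definition tI :: "int \<Rightarrow> int \<Rightarrow> pt \<Rightarrow> pt" where
  "tI p q x = (let b = fst x; m = snd x in
     if hsig b = Some False \<and> p dvd m then (tl b, fst (hd b) + q * (m div p))
     else ((smd m p, True) # b, q * sdv m p))"

fun step :: "int \<Rightarrow> int \<Rightarrow> letter \<Rightarrow> pt \<Rightarrow> pt" where
  "step p q (GA, False) x = (fst x, snd x + 1)"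
| "step p q (GA, True) x = (fst x, snd x - 1)"
| "step p q (GT, False) x = tR p q x"
| "step p q (GT, True) x = tI p q x"

fun vb :: "int \<Rightarrow> int \<Rightarrow> block list \<Rightarrow> bool" where
  "vb p q [] = True"
| "vb p q ((r, e) # rest) = ((if e then r \<in> Rs p else r \<in> Rs q) \<and>
      (hsig rest = Some (\<not> e) \<longrightarrow> r \<noteq> 0) \<and> vb p q rest)"

context
  fixes p q :: int
  assumes pq: "p > 0" "q > 0"
begin

lemma tR_vb: "vb p q b \<Longrightarrow> vb p q (fst (tR p q (b, m)))"
proof (cases "hsig b = Some True \<and> q dvd m")
  case True
  assume "vb p q b"
  then show ?thesis using True by (cases b) (auto simp: tR_def hsig_def)
next
  case False
  assume v: "vb p q b"
  have "smd m q \<in> Rs q" using F2 pq by simp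
  moreover have "hsig b = Some True \<Longrightarrow> smd m q \<noteq> 0" using False F1[of m q] by (metis add.right_neutral dvd_triv_left)
  ultimately show ?thesis using v False by (auto simp: tR_def)
qed

lemma tI_vb: "vb p q b \<Longrightarrow> vb p q (fst (tI p q (b, m)))"
proof (cases "hsig b = Some False \<and> p dvd m")
  case True
  assume "vb p q b"
  then show ?thesis using True by (cases b) (auto simp: tI_def hsig_def)
next
  case False
  assume v: "vb p q b"
  have "smd m p \<in> Rs p" using F2 pq by simp
  moreover have "hsig b = Some False \<Longrightarrow> smd m p \<noteq> 0" using False F1[of m p] by (metis add.right_neutral dvd_triv_left)
  ultimately show ?thesis using v False by (auto simp: tI_def)
qed

lemma tI_tR: "vb p q b \<Longrightarrow> tI p q (tR p q (b, m)) = (b, m)"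
proof (cases "hsig b = Some True \<and> q dvd m")
  case True
  assume v: "vb p q b"
  then obtain r rest where b: "b = (r, True) # rest" using True by (cases b) (auto simp: hsig_def)
  have r: "r \<in> Rs p" "hsig rest = Some False \<Longrightarrow> r \<noteq> 0" using v b by auto
  have e1: "tR p q (b, m) = (rest, r + p * (m div q))" using True b by (simp add: tR_def)
  have nd: "\<not> (hsig rest = Some False \<and> p dvd (r + p * (m div q)))"
    using r F4[OF pq(1) r(1)] dvd_add_left_iff[of p "p * _" r] by auto
  have "tI p q (rest, r + p * (m div q)) = ((r, True) # rest, q * (m div q))"
    using nd F3[OF pq(1) r(1)] by (auto simp: tI_def Let_def)
  then show ?thesis using e1 b True by simp
next
  case False
  assume v: "vb p q b"
  have e1: "tR p q (b, m) = ((smd m q, False) # b, p * sdv m q)" unfolding tR_def Let_def fst_conv snd_conv using False by (rule if_not_P)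
  have "tI p q ((smd m q, False) # b, p * sdv m q) = (b, smd m q + q * sdv m q)"
    using pq by (simp add: tI_def hsig_def)
  then show ?thesis using e1 F1[of m q] by (simp add: algebra_simps)
qed

lemma tR_tI: "vb p q b \<Longrightarrow> tR p q (tI p q (b, m)) = (b, m)"
proof (cases "hsig b = Some False \<and> p dvd m")
  case True
  assume v: "vb p q b"
  then obtain r rest where b: "b = (r, False) # rest" using True by (cases b) (auto simp: hsig_def)
  have r: "r \<in> Rs q" "hsig rest = Some True \<Longrightarrow> r \<noteq> 0" using v b by auto
  have e1: "tI p q (b, m) = (rest, r + q * (m div p))" using True b by (simp add: tI_def)
  have nd: "\<not> (hsig rest = Some True \<and> q dvd (r + q * (m div p)))"
    using r F4[OF pq(2) r(1)] dvd_add_left_iff[of q "q * _" r] by auto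
  have "tR p q (rest, r + q * (m div p)) = ((r, False) # rest, p * (m div p))"
    using nd F3[OF pq(2) r(1)] by (auto simp: tR_def Let_def)
  then show ?thesis using e1 b True by simp
next
  case False
  assume v: "vb p q b"
  have e1: "tI p q (b, m) = ((smd m p, True) # b, q * sdv m p)" unfolding tI_def Let_def fst_conv snd_conv using False by (rule if_not_P)
  have "tR p q ((smd m p, True) # b, q * sdv m p) = (b, smd m p + p * sdv m p)"
    using pq by (simp add: tR_def hsig_def)
  then show ?thesis using e1 F1[of m p] by (simp add: algebra_simps)
qed

lemma step_vb: assumes "vb p q (fst x)" shows "vb p q (fst (step p q l x))"
proof -
  obtain b m where x: "x = (b, m)" by (cases x)
  obtain g e where l: "l = (g, e)" by (cases l)
  show ?thesis
  proof (cases g)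
    case GA then show ?thesis using assms by (cases e) (simp_all add: x l)
  next
    case GT then show ?thesis using assms tR_vb[of b m] tI_vb[of b m] by (cases e) (simp_all add: x l)
  qed
qed

lemma fold_vb: "vb p q (fst x) \<Longrightarrow> vb p q (fst (fold (step p q) w x))"
  by (induction w arbitrary: x) (auto simp: step_vb)

lemma step_inv: assumes "vb p q (fst x)" shows "step p q (linv l) (step p q l x) = x"
proof -
  obtain b m where x: "x = (b, m)" by (cases x)
  obtain g e where l: "l = (g, e)" by (cases l)
  show ?thesis
  proof (cases g)
    case GA then show ?thesis by (cases e) (simp_all add: x l linv_def)
  next
    case GT then show ?thesis using assms tR_tI[of b m] tI_tR[of b m] by (cases e) (simp_all add: x l linv_def)
  qed
qed

lemma fold_rep_a: "fold (step p q) (replicate n (GA, e)) x = (fst x, snd x + (if e then - int n else int n))"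
proof (induction n arbitrary: x)
  case 0 then show ?case by simp
next
  case (Suc n)
  have "fold (step p q) (replicate (Suc n) (GA, e)) x = fold (step p q) (replicate n (GA, e)) (step p q (GA, e) x)"
    by (simp del: fold_replicate)
  then show ?case using Suc by (cases e) simp_all
qed

lemma rel_id:
  assumes v: "vb p q b"
  shows "fold (step p q) (BS_rel (nat p) (nat q)) (b, m) = (b, m)"
proof -
  have f0: "fold (step p q) (BS_rel (nat p) (nat q)) x = fold (step p q) (replicate (nat q) (GA,True))
        (tI p q (fold (step p q) (replicate (nat p) (GA,False)) (tR p q x)))" for x
    by (simp add: BS_rel_def del: fold_replicate)
  have f: "fold (step p q) (BS_rel (nat p) (nat q)) x =
     (let y = tI p q (let z = tR p q x in (fst z, snd z + p)) in (fst y, snd y - q))" for x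
    unfolding f0 fold_rep_a using pq by (simp add: Let_def)
  show ?thesis
  proof (cases "hsig b = Some True \<and> q dvd m")
    case True
    then obtain r rest where b: "b = (r, True) # rest" by (cases b) (auto simp: hsig_def)
    have r: "r \<in> Rs p" "hsig rest = Some False \<Longrightarrow> r \<noteq> 0" using v b by auto
    have e1: "tR p q (b, m) = (rest, r + p * (m div q))" using True b by (simp add: tR_def)
    have ee: "r + p * (m div q) + p = r + p * (m div q + 1)" by (simp add: algebra_simps)
    have nd: "\<not> (hsig rest = Some False \<and> p dvd (r + p * (m div q + 1)))"
      using r F4[OF pq(1) r(1)] dvd_add_left_iff[of p "p * _" r] by auto
    have "tI p q (rest, r + p * (m div q + 1)) = ((r, True) # rest, q * (m div q + 1))"
      using nd F3[OF pq(1) r(1)] by (auto simp: tI_def Let_def)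
    then show ?thesis using f e1 b True ee by (simp add: algebra_simps)
  next
    case False
    have e1: "tR p q (b, m) = ((smd m q, False) # b, p * sdv m q)" unfolding tR_def Let_def fst_conv snd_conv using False by (rule if_not_P)
    have ee: "p * sdv m q + p = p * (sdv m q + 1)" by (simp add: algebra_simps)
    have "tI p q ((smd m q, False) # b, p * (sdv m q + 1)) = (b, smd m q + q * (sdv m q + 1))"
      using pq by (simp add: tI_def hsig_def)
    then show ?thesis using f e1 ee F1[of m q] by (simp add: algebra_simps)
  qed
qed

lemma BS_eq_act:
  "BS_eq (nat p) (nat q) u v \<Longrightarrow> vb p q b \<Longrightarrow> fold (step p q) u (b, m) = fold (step p q) v (b, m)"
proof (induction arbitrary: b m rule: BS_eq.induct)
  case (refl w) then show ?case by simp
next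
  case (sym u v) then show ?case by simp
next
  case (trans u v w) then show ?case by simp
next
  case (cancel u z v)
  let ?y = "fold (step p q) u (b, m)"
  have "vb p q (fst ?y)" using fold_vb cancel by simp
  then have "step p q (linv z) (step p q z ?y) = ?y" by (rule step_inv)
  then show ?case by simp
next
  case (rel u v)
  obtain b' m' where y: "fold (step p q) u (b, m) = (b', m')" by fastforce
  have "vb p q b'" using fold_vb[of "(b,m)" u] rel y by simp
  then have "fold (step p q) (BS_rel (nat p) (nat q)) (b', m') = (b', m')" by (rule rel_id)
  then show ?case using y by simp
qed

end

definition T :: "real \<Rightarrow> nat \<Rightarrow> nat \<Rightarrow> real" where
  "T x l a = (\<Sum>i=1..a. x ^ (l - i))"

lemma T_shift: "l \<ge> 1 \<Longrightarrow> a \<le> l \<Longrightarrow> T x l a = (\<Sum>j=l-a..l-1. x ^ j)"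
proof (induction a)
  case 0
  have "{l..l-1} = {}" using 0 by auto
  then show ?case by (simp add: T_def)
next
  case (Suc a)
  have s: "{l - Suc a..l-1} = insert (l - Suc a) {l-a..l-1}" using Suc.prems by auto
  have "T x l (Suc a) = T x l a + x ^ (l - Suc a)" by (simp add: T_def)
  also have "\<dots> = (\<Sum>j=l-a..l-1. x ^ j) + x ^ (l - Suc a)" using Suc by simp
  also have "\<dots> = (\<Sum>j=l - Suc a..l-1. x ^ j)" unfolding s using Suc.prems by (subst sum.insert) auto
  finally show ?case .
qed

definition SW :: "nat \<Rightarrow> nat \<Rightarrow> real \<Rightarrow> real" where
  "SW p q x = x ^ (q div 2) + T x (q div 2) (q div 2) + T x (q div 2) ((q - 1) div 2)
     + T x (q div 2) (p div 2) + T x (q div 2) ((p - 1) div 2)"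

lemma BS_P_gen:
  assumes "2 \<le> p" "p \<le> q"
  shows "BS_P p q x = (let k = p div 2; l = q div 2;
         Ck = (if even p then 1 else 2 :: real);
         Cl = (if even q then 1 else 2 :: real) in
          x^(l+1) - x^l - 2 * (\<Sum>i=l-k+1..l-1. x^i) - Ck * x^(l-k)
            - 2 * (\<Sum>i=1..l-1. x^i) - Cl)"
proof -
  consider "p = 2 \<and> q = 2" | "p = 2 \<and> q = 3" | "p = 2 \<and> q \<ge> 4" | "p = 3 \<and> q = 3" | "p = 3 \<and> q \<ge> 4"
    | "p \<ge> 4" using assms by linarith
  then show ?thesis
  proof cases
    case 1 then show ?thesis by (simp add: BS_P_def power2_eq_square)
  next
    case 2 then show ?thesis by (simp add: BS_P_def power2_eq_square)
  next
    case 3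
    have "{q div 2..q div 2 - 1} = {}" using 3 by auto
    then show ?thesis using 3 by (simp add: BS_P_def Let_def)
  next
    case 4 then show ?thesis by (simp add: BS_P_def power2_eq_square)
  next
    case 5
    have "{q div 2..q div 2 - 1} = {}" using 5 by auto
    then show ?thesis using 5 by (simp add: BS_P_def Let_def)
  next
    case 6 then show ?thesis by (simp add: BS_P_def Let_def)
  qed
qed

lemma sum_0_split: "l \<ge> 1 \<Longrightarrow> (\<Sum>j=0..l-1. (x::real) ^ j) = 1 + (\<Sum>j=1..l-1. x ^ j)"
  by (subst sum.atLeast_Suc_atMost) auto

lemma BS_P_SW:
  assumes "2 \<le> p" "p \<le> q"
  shows "BS_P p q x = x ^ (q div 2 + 1) - SW p q x"
proof -
  define l where "l = q div 2"
  define k where "k = p div 2"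
  have l1: "l \<ge> 1" "k \<ge> 1" "k \<le> l" using assms by (auto simp: l_def k_def div_le_mono)
  have Tl: "T x l l = 1 + (\<Sum>j=1..l-1. x ^ j)" using T_shift[of l l x] l1 sum_0_split[of l x] by simp
  have Tq: "T x l ((q - 1) div 2) = (if even q then 0 else 1) + (\<Sum>j=1..l-1. x ^ j)"
  proof (cases "even q")
    case True
    then have "(q - 1) div 2 = l - 1" using assms by (auto simp: l_def elim!: evenE)
    then show ?thesis using T_shift[of l "l - 1" x] l1 True by simp
  next
    case False
    then have "(q - 1) div 2 = l" by (auto simp: l_def elim!: oddE)
    then show ?thesis using Tl False by simp
  qed
  have Tk: "T x l k = x ^ (l - k) + (\<Sum>j=l-k+1..l-1. x ^ j)"
    using T_shift[of l k x] l1 by (subst (asm) sum.atLeast_Suc_atMost) (auto simp: Suc_diff_le)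
  have Tp: "T x l ((p - 1) div 2) = (if even p then 0 else x ^ (l - k)) + (\<Sum>j=l-k+1..l-1. x ^ j)"
  proof (cases "even p")
    case True
    then have e: "(p - 1) div 2 = k - 1" using assms by (auto simp: k_def elim!: evenE)
    have "l - (k - 1) = l - k + 1" using l1 by simp
    then show ?thesis using T_shift[of l "k - 1" x] l1 True e by simp
  next
    case False
    then have "(p - 1) div 2 = k" by (auto simp: k_def elim!: oddE)
    then show ?thesis using Tk False by simp
  qed
  have S: "SW p q x = x ^ l + 2 * (\<Sum>j=1..l-1. x ^ j) + (if even q then 1 else 2)
      + 2 * (\<Sum>j=l-k+1..l-1. x ^ j) + (if even p then 1 else 2) * x ^ (l - k)"
    unfolding SW_def l_def[symmetric] k_def[symmetric] Tl Tq Tk Tp by auto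
  have G: "BS_P p q x = x^(l+1) - x^l - 2 * (\<Sum>i=l-k+1..l-1. x^i) - (if even p then 1 else 2) * x^(l-k)
            - 2 * (\<Sum>i=1..l-1. x^i) - (if even q then 1 else 2)"
    using BS_P_gen[OF assms, of x] unfolding Let_def l_def k_def by (simp only:)
  have "BS_P p q x = x ^ (l + 1) - SW p q x" using G S by linarith
  then show ?thesis by (simp add: l_def)
qed

lemma length_le_wt:
  assumes "\<forall>c\<in>W. 1 \<le> wt c" "set cs \<subseteq> W"
  shows "length cs \<le> sum_list (map wt cs)"
  using assms(2) by (induction cs) (use assms(1) in force)+

lemma count_lb:
  fixes W :: "'a set" and wt :: "'a \<Rightarrow> nat" and \<rho> :: real and L :: nat
  assumes fin: "finite W" and wt: "\<forall>c\<in>W. 1 \<le> wt c \<and> wt c \<le> L"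
    and c0: "c0 \<in> W" "wt c0 = 1" and rho: "\<rho> \<ge> 1"
    and eq: "(\<Sum>c\<in>W. \<rho> ^ (L - wt c)) = \<rho> ^ L"
  shows "real (card {cs. set cs \<subseteq> W \<and> sum_list (map wt cs) = n}) \<ge> \<rho> ^ n / \<rho> ^ L"
proof -
  define S where "S n = {cs. set cs \<subseteq> W \<and> sum_list (map wt cs) = n}" for n
  have finS: "finite (S n)" for n
  proof (rule finite_subset)
    show "S n \<subseteq> {cs. set cs \<subseteq> W \<and> length cs \<le> n}"
      using length_le_wt[of W wt] wt by (auto simp: S_def)
    show "finite {cs. set cs \<subseteq> W \<and> length cs \<le> n}" by (rule finite_lists_length_le[OF fin])
  qed
  have L1: "L \<ge> 1" using wt c0 by force
  have rpos: "\<rho> > 0" using rho by simp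
  have "real (card (S n)) \<ge> \<rho> ^ n / \<rho> ^ L"
  proof (induction n rule: less_induct)
    case (less n)
    show ?case
    proof (cases "n < L")
      case True
      have "replicate n c0 \<in> S n" using c0 by (auto simp: S_def sum_list_replicate)
      then have "card (S n) \<ge> 1" using finS[of n] by (metis One_nat_def Suc_leI card_gt_0_iff empty_iff)
      moreover have "\<rho> ^ n \<le> \<rho> ^ L" using True rho by (intro power_increasing) auto
      then have "\<rho> ^ n / \<rho> ^ L \<le> 1" using rpos by simp
      ultimately show ?thesis by simp
    next
      case False
      define A where "A c = (Cons c) ` S (n - wt c)" for c
      have sub: "(\<Union>c\<in>W. A c) \<subseteq> S n"
      proof
        fix cs assume "cs \<in> (\<Union>c\<in>W. A c)"
        then obtain c ds where "c \<in> W" "ds \<in> S (n - wt c)" "cs = c # ds" by (auto simp: A_def)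
        then show "cs \<in> S n" using wt False by (auto simp: S_def)
      qed
      have cardU: "card (\<Union>c\<in>W. A c) = (\<Sum>c\<in>W. card (A c))"
        by (rule card_UN_disjoint[OF fin]) (auto simp: A_def finS)
      have cA: "card (A c) = card (S (n - wt c))" for c
        unfolding A_def by (rule card_image) (simp add: inj_on_def)
      have "\<rho> ^ n / \<rho> ^ L = (\<Sum>c\<in>W. \<rho> ^ (n - wt c) / \<rho> ^ L)"
      proof -
        have "(\<Sum>c\<in>W. \<rho> ^ (n - wt c)) = (\<Sum>c\<in>W. \<rho> ^ (n - L) * \<rho> ^ (L - wt c))"
        proof (rule sum.cong)
          fix c assume "c \<in> W"
          then have "n - wt c = (n - L) + (L - wt c)" using wt False by auto
          then show "\<rho> ^ (n - wt c) = \<rho> ^ (n - L) * \<rho> ^ (L - wt c)" by (simp add: power_add)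
        qed simp
        also have "\<dots> = \<rho> ^ (n - L) * \<rho> ^ L" by (simp add: sum_distrib_left[symmetric] eq)
        also have "\<dots> = \<rho> ^ n" using False by (simp add: power_add[symmetric])
        finally show ?thesis by (simp add: sum_divide_distrib[symmetric])
      qed
      also have "\<dots> \<le> (\<Sum>c\<in>W. real (card (S (n - wt c))))"
      proof (rule sum_mono)
        fix c assume "c \<in> W"
        then have "n - wt c < n" using wt False L1 by auto
        then show "\<rho> ^ (n - wt c) / \<rho> ^ L \<le> real (card (S (n - wt c)))" by (rule less)
      qed
      also have "\<dots> = real (card (\<Union>c\<in>W. A c))" using cardU cA by simp
      also have "\<dots> \<le> real (card (S n))" using card_mono[OF finS sub] by simp
      finally show ?thesis .
    qed
  qed
  then show ?thesis by (simp add: S_def)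
qed

lemma Rs_nat: "q \<ge> 1 \<Longrightarrow> Rs (int q) = {- int ((q - 1) div 2) .. int (q div 2)}"
proof -
  assume q: "q \<ge> 1"
  have h: "hh (int q) = int ((q - 1) div 2)" unfolding hh_def using q by (simp add: zdiv_int of_nat_diff)
  have "int q - 1 - int ((q - 1) div 2) = int (q div 2)" using q by linarith
  then show ?thesis unfolding Rs_def h by simp
qed

lemma sum_Icc_abs:
  fixes f :: "nat \<Rightarrow> real"
  shows "(\<Sum>r\<in>{- int a..int b}. f (nat \<bar>r\<bar>)) = f 0 + (\<Sum>i=1..b. f i) + (\<Sum>i=1..a. f i)"
proof (induction a)
  case 0
  show ?case
  proof (induction b)
    case 0 then show ?case by simp
  next
    case (Suc b)
    have s: "{- int 0..int (Suc b)} = insert (int (Suc b)) {- int 0..int b}" by auto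
    have e: "nat (1 + int b) = Suc b" using Suc_nat_eq_nat_zadd1[of "int b"] by simp
    show ?case unfolding s using Suc e by (subst sum.insert) auto
  qed
next
  case (Suc a)
  have s: "{- int (Suc a)..int b} = insert (- int (Suc a)) {- int a..int b}" by auto
  have e: "nat (int a + 1) = Suc a" using Suc_nat_eq_nat_zadd1[of "int a"] by (simp add: add.commute)
  show ?case unfolding s using Suc e by (subst sum.insert) auto
qed

definition Wc :: "nat \<Rightarrow> nat \<Rightarrow> (int \<times> bool) set" where
  "Wc p q = (\<lambda>r. (r, False)) ` Rs (int q) \<union> (\<lambda>r. (r, True)) ` (Rs (int p) - {0})"

definition wtc :: "int \<times> bool \<Rightarrow> nat" where "wtc c = nat \<bar>fst c\<bar> + 1"

lemma Wc_sum:
  assumes "2 \<le> p" "p \<le> q"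
  shows "(\<Sum>c\<in>Wc p q. x ^ (q div 2 + 1 - wtc c)) = SW p q x"
proof -
  define l where "l = q div 2"
  define f where "f i = x ^ (l - i)" for i
  have "(\<Sum>c\<in>Wc p q. x ^ (l + 1 - wtc c)) =
      (\<Sum>c\<in>(\<lambda>r. (r, False)) ` Rs (int q). x ^ (l + 1 - wtc c)) +
      (\<Sum>c\<in>(\<lambda>r. (r, True)) ` (Rs (int p) - {0}). x ^ (l + 1 - wtc c))"
    unfolding Wc_def by (rule sum.union_disjoint) (auto simp: Rs_def)
  also have "\<dots> = (\<Sum>r\<in>Rs (int q). f (nat \<bar>r\<bar>)) + (\<Sum>r\<in>Rs (int p) - {0}. f (nat \<bar>r\<bar>))"
    by (subst sum.reindex, simp add: inj_on_def, subst sum.reindex, simp add: inj_on_def)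
       (simp add: wtc_def f_def)
  also have "(\<Sum>r\<in>Rs (int p) - {0}. f (nat \<bar>r\<bar>)) = (\<Sum>r\<in>Rs (int p). f (nat \<bar>r\<bar>)) - f 0"
    using assms by (subst sum_diff1) (auto simp: Rs_def hh_def)
  finally have "(\<Sum>c\<in>Wc p q. x ^ (l + 1 - wtc c)) =
     f 0 + (\<Sum>i=1..l. f i) + (\<Sum>i=1..(q - 1) div 2. f i) + (\<Sum>i=1..p div 2. f i) + (\<Sum>i=1..(p - 1) div 2. f i)"
    using assms by (simp add: Rs_nat sum_Icc_abs l_def)
  then show ?thesis by (simp add: SW_def T_def f_def l_def)
qed

lemma Wc_props:
  assumes "2 \<le> p" "p \<le> q"
  shows "finite (Wc p q)" "\<forall>c\<in>Wc p q. 1 \<le> wtc c \<and> wtc c \<le> q div 2 + 1"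
    "(0, False) \<in> Wc p q" "wtc (0, False) = 1" "(1, False) \<in> Wc p q"
proof -
  show "finite (Wc p q)" by (simp add: Wc_def Rs_def)
  have k: "p div 2 \<le> q div 2" using assms by (simp add: div_le_mono)
  show "\<forall>c\<in>Wc p q. 1 \<le> wtc c \<and> wtc c \<le> q div 2 + 1"
    using assms k by (auto simp: Wc_def wtc_def Rs_nat) 
  show "(0, False) \<in> Wc p q" using assms by (auto simp: Wc_def Rs_nat)
  show "wtc (0, False) = 1" by (simp add: wtc_def)
  show "(1, False) \<in> Wc p q" using assms by (auto simp: Wc_def Rs_nat)
qed

fun enc :: "bool \<Rightarrow> (int \<times> bool) list \<Rightarrow> (int \<times> bool) list" where
  "enc s [] = []"
| "enc s ((r, e) # cs) = (if r = 0 then (0, s) # enc s cs else (r, e) # enc e cs)"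

definition bw :: "int \<times> bool \<Rightarrow> letter list" where
  "bw c = replicate (nat \<bar>fst c\<bar>) (GA, fst c < 0) @ [(GT, snd c)]"

definition dec :: "int \<times> bool \<Rightarrow> int \<times> bool" where
  "dec c = (if fst c = 0 then (0, False) else c)"

lemma blk:
  fixes P Q :: int
  assumes pq: "P > 0" "Q > 0" and v: "vb P Q b"
    and rg: "e \<longrightarrow> r \<in> Rs P" "\<not> e \<longrightarrow> r \<in> Rs Q"
    and np: "hsig b = Some (\<not> e) \<longrightarrow> r \<noteq> 0"
  shows "fold (step P Q) (bw (r, e)) (b, 0) = ((r, e) # b, 0)"
proof -
  have "fold (step P Q) (replicate (nat \<bar>r\<bar>) (GA, r < 0)) (b, 0) = (b, r)"
    using fold_rep_a[OF pq, of "nat \<bar>r\<bar>" "r < 0" "(b, 0)"] by simp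
  then have f: "fold (step P Q) (bw (r, e)) (b, 0) = step P Q (GT, e) (b, r)"
    by (simp add: bw_def del: fold_replicate)
  show ?thesis
  proof (cases e)
    case False
    have r: "r \<in> Rs Q" using rg False by simp
    have "\<not> (hsig b = Some True \<and> Q dvd r)" using F4[OF pq(2) r] np False by auto
    then have "tR P Q (b, r) = ((smd r Q, False) # b, P * sdv r Q)"
      unfolding tR_def Let_def fst_conv snd_conv by (rule if_not_P)
    then show ?thesis using f False F3'[OF pq(2) r] by simp
  next
    case True
    have r: "r \<in> Rs P" using rg True by simp
    have "\<not> (hsig b = Some False \<and> P dvd r)" using F4[OF pq(1) r] np True by auto
    then have "tI P Q (b, r) = ((smd r P, True) # b, Q * sdv r P)"
      unfolding tI_def Let_def fst_conv snd_conv by (rule if_not_P)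
    then show ?thesis using f True F3'[OF pq(1) r] by simp
  qed
qed

lemma enc_act:
  assumes pq: "2 \<le> p" "p \<le> q"
  shows "set cs \<subseteq> Wc p q \<Longrightarrow> vb (int p) (int q) b \<Longrightarrow> hsig b \<noteq> Some (\<not> s) \<Longrightarrow>
    fold (step (int p) (int q)) (concat (map bw (enc s cs))) (b, 0) = (rev (enc s cs) @ b, 0)"
proof (induction cs arbitrary: b s)
  case Nil then show ?case by simp
next
  case (Cons c cs)
  obtain r e where c: "c = (r, e)" by (cases c)
  have P: "int p > 0" "int q > 0" using pq by auto
  show ?case
  proof (cases "r = 0")
    case True
    have b1: "fold (step (int p) (int q)) (bw (0, s)) (b, 0) = ((0, s) # b, 0)"
      using blk[OF P Cons.prems(2)] zero_Rs[OF P(1)] zero_Rs[OF P(2)] Cons.prems(3) by auto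
    have v: "vb (int p) (int q) ((0, s) # b)" using zero_Rs[OF P(1)] zero_Rs[OF P(2)] Cons.prems by auto
    have "fold (step (int p) (int q)) (concat (map bw (enc s cs))) ((0, s) # b, 0) = (rev (enc s cs) @ ((0, s) # b), 0)"
      using Cons.IH[of "(0, s) # b" s] Cons.prems v by (auto simp: hsig_def)
    then show ?thesis using c True b1 by simp
  next
    case False
    have cw: "(r, e) \<in> Wc p q" using Cons.prems c by auto
    then have rg: "e \<longrightarrow> r \<in> Rs (int p)" "\<not> e \<longrightarrow> r \<in> Rs (int q)" by (auto simp: Wc_def)
    have b1: "fold (step (int p) (int q)) (bw (r, e)) (b, 0) = ((r, e) # b, 0)"
      using blk[OF P Cons.prems(2) rg] False by auto
    have v: "vb (int p) (int q) ((r, e) # b)" using rg False Cons.prems by auto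
    have "fold (step (int p) (int q)) (concat (map bw (enc e cs))) ((r, e) # b, 0) = (rev (enc e cs) @ ((r, e) # b), 0)"
      using Cons.IH[of "(r, e) # b" e] Cons.prems v by (auto simp: hsig_def)
    then show ?thesis using c False b1 by simp
  qed
qed

lemma dec_enc: "set cs \<subseteq> Wc p q \<Longrightarrow> map dec (enc s cs) = cs"
proof (induction cs arbitrary: s)
  case Nil then show ?case by simp
next
  case (Cons c cs)
  obtain r e where c: "c = (r, e)" by (cases c)
  have "r = 0 \<Longrightarrow> e = False" using Cons.prems c by (auto simp: Wc_def)
  then show ?case using Cons c by (auto simp: dec_def)
qed

lemma len_enc: "length (concat (map bw (enc s cs))) = sum_list (map wtc cs)"
proof (induction cs arbitrary: s)
  case Nil then show ?case by simp
next
  case (Cons c cs)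
  obtain r e where c: "c = (r, e)" by (cases c)
  then show ?case using Cons by (auto simp: bw_def wtc_def)
qed

lemma card_S_le:
  assumes pq: "2 \<le> p" "p \<le> q"
  shows "card {cs. set cs \<subseteq> Wc p q \<and> sum_list (map wtc cs) = n} \<le> BS_gamma p q n"
proof -
  define S where "S = {cs. set cs \<subseteq> Wc p q \<and> sum_list (map wtc cs) = n}"
  define \<Phi> where "\<Phi> cs = BS_elem p q (concat (map bw (enc False cs)))" for cs
  have P: "int p > 0" "int q > 0" using pq by auto
  have act: "fold (step (int p) (int q)) (concat (map bw (enc False cs))) ([], 0) = (rev (enc False cs), 0)"
    if "set cs \<subseteq> Wc p q" for cs
    using enc_act[OF pq that, of "[]" False] by (simp add: hsig_def)
  have inj: "inj_on \<Phi> S"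
  proof
    fix c1 c2 assume c1: "c1 \<in> S" and c2: "c2 \<in> S" and e: "\<Phi> c1 = \<Phi> c2"
    then have "BS_eq p q (concat (map bw (enc False c1))) (concat (map bw (enc False c2)))"
      by (simp add: \<Phi>_def BS_elem_eq_iff)
    then have "BS_eq (nat (int p)) (nat (int q)) (concat (map bw (enc False c1))) (concat (map bw (enc False c2)))"
      by simp
    from BS_eq_act[OF P this, of "[]" 0]
    have "rev (enc False c1) = rev (enc False c2)" using act c1 c2 by (simp add: S_def)
    then have "map dec (enc False c1) = map dec (enc False c2)" by simp
    then show "c1 = c2" using dec_enc c1 c2 by (metis (no_types, lifting) S_def mem_Collect_eq)
  qed
  have img: "\<Phi> ` S \<subseteq> Aset p q n"
  proof
    fix X assume "X \<in> \<Phi> ` S"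
    then obtain cs where cs: "cs \<in> S" "X = \<Phi> cs" by blast
    have "BS_word_length p q X \<le> n"
      using BS_wl_le[of p q "concat (map bw (enc False cs))"] cs len_enc[of False cs]
      by (simp add: \<Phi>_def S_def)
    then show "X \<in> Aset p q n" using cs by (simp add: Aset_def BS_group_def \<Phi>_def)
  qed
  have "card S \<le> card (Aset p q n)" by (rule card_inj_on_le[OF inj img Aset_finite])
  then show ?thesis by (simp add: S_def gamma_Aset)
qed

lemma sub_mult:
  fixes a :: "nat \<Rightarrow> real"
  assumes sub: "\<And>m n. a (m + n) \<le> a m + a n"
  shows "a (k * m + r) \<le> real k * a m + a r"
proof (induction k)
  case 0 then show ?case by simp
next
  case (Suc k)
  have "a (Suc k * m + r) = a (m + (k * m + r))" by (simp add: algebra_simps)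
  also have "\<dots> \<le> a m + a (k * m + r)" by (rule sub)
  also have "\<dots> \<le> a m + (real k * a m + a r)" using Suc by simp
  finally show ?case by (simp add: algebra_simps)
qed

lemma fekete:
  fixes a :: "nat \<Rightarrow> real"
  assumes sub: "\<And>m n. a (m + n) \<le> a m + a n" and nn: "\<And>n. a n \<ge> 0"
  shows "convergent (\<lambda>n. a n / real n)"
proof -
  define L where "L = Inf ((\<lambda>n. a n / real n) ` {1..})"
  have bdd: "bdd_below ((\<lambda>n. a n / real n) ` {1..})"
    by (rule bdd_belowI[of _ 0]) (use nn in auto)
  have low: "L \<le> a n / real n" if "n \<ge> 1" for n
    unfolding L_def by (rule cINF_lower[OF bdd]) (use that in auto)
  have "(\<lambda>n. a n / real n) \<longlonglongrightarrow> L"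
  proof (rule LIMSEQ_I)
    fix \<epsilon> :: real assume e: "\<epsilon> > 0"
    have "Inf ((\<lambda>n. a n / real n) ` {1..}) < L + \<epsilon> / 2" using e by (simp add: L_def)
    then obtain m where m: "m \<ge> 1" "a m / real m < L + \<epsilon> / 2"
      using cInf_lessD[of "(\<lambda>n. a n / real n) ` {1..}" "L + \<epsilon> / 2"] by auto
    define C where "C = (\<Sum>r<m. a r)"
    have C0: "C \<ge> 0" unfolding C_def by (rule sum_nonneg) (use nn in auto)
    define N where "N = nat \<lceil>2 * C / \<epsilon>\<rceil> + 1"
    have "2 * C / \<epsilon> \<le> real (nat \<lceil>2 * C / \<epsilon>\<rceil>)" by (rule real_nat_ceiling_ge)
    then have N: "N > 2 * C / \<epsilon>" "N \<ge> 1" by (auto simp: N_def)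
    show "\<exists>no. \<forall>n\<ge>no. norm (a n / real n - L) < \<epsilon>"
    proof (intro exI allI impI)
      fix n assume n: "n \<ge> N"
      then have n1: "n \<ge> 1" using N by simp
      have npos: "real n > 0" using n1 by simp
      have dec: "n = (n div m) * m + n mod m" by simp
      have "a n \<le> real (n div m) * a m + a (n mod m)"
        using sub_mult[of a "n div m" m "n mod m", OF sub] dec by simp
      also have "a (n mod m) \<le> C" unfolding C_def
        by (rule member_le_sum) (use nn m in auto)
      finally have an: "a n \<le> real (n div m) * a m + C" by simp
      have "real (n div m) * real m \<le> real n"
        using div_times_less_eq_dividend[of n m] by (metis of_nat_le_iff of_nat_mult)
      then have "real (n div m) \<le> real n / real m" using m by (simp add: field_simps)
      then have "real (n div m) * a m \<le> real n / real m * a m" using nn[of m] by (rule mult_right_mono)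
      then have "a n / real n \<le> (real n / real m * a m + C) / real n" using an npos by (simp add: divide_right_mono)
      also have "\<dots> = a m / real m + C / real n" using npos by (simp add: field_simps)
      also have "C / real n < \<epsilon> / 2"
      proof -
        have "2 * C / \<epsilon> < real n" using N n by linarith
        then have "2 * C < \<epsilon> * real n" using e by (simp add: field_simps)
        then show ?thesis using npos by (simp add: field_simps)
      qed
      finally have "a n / real n < L + \<epsilon>" using m by linarith
      moreover have "L \<le> a n / real n" by (rule low[OF n1])
      ultimately show "norm (a n / real n - L) < \<epsilon>" using e by simp
    qed
  qed
  then show ?thesis by (rule convergentI)
qed

lemma geo3: "2 * (\<Sum>j<n. (3::real) ^ j) = 3 ^ n - 1"
  by (induction n) (simp_all add: algebra_simps)

lemma SW3:
  assumes "2 \<le> p" "p \<le> q"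
  shows "SW p q 3 < 3 ^ (q div 2 + 1)"
proof -
  define l where "l = q div 2"
  have l1: "l \<ge> 1" using assms by (simp add: l_def)
  have Tle: "T 3 l a \<le> T 3 l l" if "a \<le> l" for a
    unfolding T_def by (rule sum_mono2) (use that in auto)
  have "T 3 l l = (\<Sum>j=0..l-1. (3::real) ^ j)" using T_shift[OF l1, of l 3] by simp
  also have "{0..l-1} = {..<l}" using l1 by auto
  finally have Tl: "2 * T 3 l l = 3 ^ l - 1" using geo3[of l] by simp
  have k: "p div 2 \<le> l" "(p - 1) div 2 \<le> l" "(q - 1) div 2 \<le> l" using assms
    by (auto simp: l_def div_le_mono)
  have "SW p q 3 \<le> 3 ^ l + 4 * T 3 l l"
    unfolding SW_def l_def[symmetric] using Tle[OF k(1)] Tle[OF k(2)] Tle[OF k(3)] by linarith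
  also have "\<dots> = 3 ^ l + 2 * (3 ^ l - 1)" using Tl by simp
  also have "\<dots> < 3 ^ (l + 1)" by simp
  finally show ?thesis by (simp add: l_def)
qed

theorem theorem5p3:
  fixes p q :: nat
  assumes "2 \<le> p" and "p \<le> q"
  shows "Max {x. BS_P p q x = 0} \<le> BS_growth_rate p q"
proof -
  note pq = assms
  define L where "L = q div 2 + 1"
  define W where "W = Wc p q"
  have Pw: "BS_P p q x = x ^ L - (\<Sum>c\<in>W. x ^ (L - wtc c))" for x
    using BS_P_SW[OF pq, of x] Wc_sum[OF pq, of x] by (simp add: L_def W_def)
  define Qp :: "real poly" where "Qp = monom 1 L - (\<Sum>c\<in>W. monom 1 (L - wtc c))"
  have pQ: "poly Qp x = BS_P p q x" for x
    by (simp add: Qp_def Pw poly_sum poly_monom)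
  have Wp: "finite W" "\<forall>c\<in>W. 1 \<le> wtc c \<and> wtc c \<le> L" "(0, False) \<in> W" "wtc (0, False) = 1" "(1, False) \<in> W"
    using Wc_props[OF pq] by (simp_all add: W_def L_def)
  have "card {(0::int, False), (1, False)} \<le> card W" by (rule card_mono) (use Wp in auto)
  then have cW: "card W \<ge> 2" by simp
  have P1: "BS_P p q 1 < 0" using cW by (simp add: Pw)
  have P3: "BS_P p q 3 > 0" using BS_P_SW[OF pq, of 3] SW3[OF pq] by simp
  have Qnz: "Qp \<noteq> 0" using P1 pQ[of 1] by auto
  define S where "S = {x. BS_P p q x = 0}"
  have finS: "finite S" using poly_roots_finite[OF Qnz] by (simp add: S_def pQ)
  have "\<exists>x. 1 \<le> x \<and> x \<le> 3 \<and> BS_P p q x = 0"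
  proof -
    have c: "\<forall>x. 1 \<le> x \<and> x \<le> 3 \<longrightarrow> isCont (\<lambda>x. poly Qp x) x" using poly_isCont by blast
    have "poly Qp 1 \<le> 0" "0 \<le> poly Qp 3" using P1 P3 pQ by (auto simp: less_imp_le)
    then have "\<exists>x. 1 \<le> x \<and> x \<le> (3::real) \<and> poly Qp x = 0"
      using IVT[of "\<lambda>x. poly Qp x" 1 0 3] c by auto
    then show ?thesis using pQ by auto
  qed
  then obtain x0 where x0: "1 \<le> x0" "BS_P p q x0 = 0" by blast
  define \<rho> where "\<rho> = Max S"
  have \<rho>S: "\<rho> \<in> S" unfolding \<rho>_def by (rule Max_in[OF finS]) (use x0 S_def in auto)
  have \<rho>1: "\<rho> \<ge> 1" using Max_ge[OF finS, of x0] x0 by (simp add: \<rho>_def S_def)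
  have eq: "(\<Sum>c\<in>W. \<rho> ^ (L - wtc c)) = \<rho> ^ L" using \<rho>S Pw[of \<rho>] by (simp add: S_def)
  have lb: "real (BS_gamma p q n) \<ge> \<rho> ^ n / \<rho> ^ L" for n
  proof -
    have "\<rho> ^ n / \<rho> ^ L \<le> real (card {cs. set cs \<subseteq> W \<and> sum_list (map wtc cs) = n})"
      by (rule count_lb[OF Wp(1) Wp(2) Wp(3) Wp(4) \<rho>1 eq])
    also have "\<dots> \<le> real (BS_gamma p q n)" using card_S_le[OF pq, of n] by (simp add: W_def)
    finally show ?thesis .
  qed
  define a where "a n = ln (real (BS_gamma p q n))" for n
  have gpos: "real (BS_gamma p q n) \<ge> 1" for n using gamma_pos[of p q n] by simp
  have sub: "a (m + n) \<le> a m + a n" for m n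
  proof -
    have "real (BS_gamma p q (m + n)) \<le> real (BS_gamma p q m) * real (BS_gamma p q n)"
      using gamma_submult[of p q m n] by (metis of_nat_le_iff of_nat_mult)
    then have "a (m + n) \<le> ln (real (BS_gamma p q m) * real (BS_gamma p q n))"
      unfolding a_def using gpos[of "m + n"] by (intro ln_mono) auto
    also have "\<dots> = a m + a n" unfolding a_def using gpos[of m] gpos[of n] by (simp add: ln_mult)
    finally show ?thesis .
  qed
  have nn: "a n \<ge> 0" for n using gpos by (simp add: a_def)
  obtain Lf where Lf: "(\<lambda>n. a n / real n) \<longlonglongrightarrow> Lf"
    using fekete[of a, OF sub nn] by (auto simp: convergent_def)
  have groot: "root n (real (BS_gamma p q n)) = exp (a n / real n)" if "n > 0" for n
  proof -
    have gp: "real (BS_gamma p q n) > 0" using gpos[of n] by simp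
    show ?thesis using that gp by (simp add: root_powr_inverse powr_def a_def field_simps)
  qed
  have gl: "(\<lambda>n. root n (real (BS_gamma p q n))) \<longlonglongrightarrow> exp Lf"
  proof (rule Lim_transform_eventually)
    show "(\<lambda>n. exp (a n / real n)) \<longlonglongrightarrow> exp Lf" by (rule tendsto_exp[OF Lf])
    show "\<forall>\<^sub>F n in sequentially. exp (a n / real n) = root n (real (BS_gamma p q n))"
      unfolding eventually_sequentially by (rule exI[of _ 1]) (auto simp: groot)
  qed
  then have grate: "BS_growth_rate p q = exp Lf" unfolding BS_growth_rate_def by (rule limI)
  have hl: "(\<lambda>n. \<rho> / root n (\<rho> ^ L)) \<longlonglongrightarrow> \<rho> / 1"
    by (intro tendsto_divide tendsto_const LIMSEQ_root_const) (use \<rho>1 in auto)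
  have "\<rho> / 1 \<le> exp Lf"
  proof (rule LIMSEQ_le[OF hl gl])
    show "\<exists>N. \<forall>n\<ge>N. \<rho> / root n (\<rho> ^ L) \<le> root n (real (BS_gamma p q n))"
    proof (intro exI allI impI)
      fix n :: nat assume n: "n \<ge> 1"
      have "\<rho> / root n (\<rho> ^ L) = root n (\<rho> ^ n / \<rho> ^ L)"
        using n \<rho>1 by (simp add: real_root_divide real_root_power_cancel)
      also have "\<dots> \<le> root n (real (BS_gamma p q n))"
        using n lb[of n] by (intro real_root_le_mono) auto
      finally show "\<rho> / root n (\<rho> ^ L) \<le> root n (real (BS_gamma p q n))" .
    qed
  qed
  then show ?thesis using grate by (simp add: \<rho>_def S_def)
qed

end
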